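(* Let $R$ be a quotient root system and $\Phi\subseteq R^+$ an inversion set. The relation $\leq$ on the set of connected components of $G_\Phi^{\Phi^c}$, defined by $A\le B$ iff there is a (possibly empty) sequence of components $C_1,\dots,C_n$ such that the standard sum $A+C_1+\cdots+C_n$ is defined and equals $B$, is a partial order.
   Context: A quotient root system (QRS) $R$ is the set of non-zero images of a root system $\Delta$ (with base $\Sigma$) under the orthogonal projection of its ambient Euclidean space onto $(\mathrm{span}\,J)^\perp$ for some $J\subsetneq\Sigma$; its base consists of the images of $\Sigma\setminus J$, and every root is an integer combination of the base with all coefficients $\ge0$ (positive roots, $R^+$) or all $\le0$. $\Phi\subseteq R^+$ is closed if $\alpha,\beta\in\Phi$, $\alpha+\beta\in R$ imply $\alpha+\beta\in\Phi$; co-closed if $\Phi^c:=R^+\setminus\Phi$ is closed; an inversion set if both. $G_\Phi^{\Phi^c}$ is the graph with vertex set $\Phi$ in which $\alpha,\alpha'$ are adjacent iff $\alpha-\alpha'\in\Phi^c\cup(-\Phi^c)$; components are its connected components. Addition of components: for components $A,B$ let $Z=\{\alpha+\beta:\alpha\in A,\beta\in B\}\cap R$. If $Z\ne\emptyset$ lies in a single component $C$, $A+B:=C$. If $Z$ meets more than one component, then (as established in the paper) $A=B$ and $Z$ meets exactly two components, $A$ and some $C\ne A$; then $A+A:=C$. If $Z=\emptyset$, $A+B$ is undefined. The standard sum $A+C_1+\cdots+C_n$ means $(\cdots((A+C_1)+C_2)+\cdots)+C_n$, with every partial sum required to be defined; for $n=0$ it is $A$. *)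

theory Defs
  imports "HOL-Analysis.Analysis"
begin

definition root_system :: "'a::euclidean_space set \<Rightarrow> bool" where
  "root_system \<Delta> \<longleftrightarrow> finite \<Delta> \<and> 0 \<notin> \<Delta> \<and> span \<Delta> = UNIV \<and>
     (\<forall>\<alpha>\<in>\<Delta>. \<forall>\<beta>\<in>\<Delta>. 2 * (\<beta> \<bullet> \<alpha>) / (\<alpha> \<bullet> \<alpha>) \<in> \<int> \<and>
        \<beta> - (2 * (\<beta> \<bullet> \<alpha>) / (\<alpha> \<bullet> \<alpha>)) *\<^sub>R \<alpha> \<in> \<Delta>) \<and>
     (\<forall>\<alpha>\<in>\<Delta>. \<forall>c::real. c *\<^sub>R \<alpha> \<in> \<Delta> \<longrightarrow> c = 1 \<or> c = -1)"

definition nonneg_int_comb :: "'a::real_vector set \<Rightarrow> 'a \<Rightarrow> bool" where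
  "nonneg_int_comb B v \<longleftrightarrow>
     (\<exists>c. (\<forall>b\<in>B. c b \<in> \<int> \<and> c b \<ge> 0) \<and> v = (\<Sum>b\<in>B. c b *\<^sub>R b))"

definition is_base :: "'a::euclidean_space set \<Rightarrow> 'a set \<Rightarrow> bool" where
  "is_base \<Delta> \<Sigma> \<longleftrightarrow> \<Sigma> \<subseteq> \<Delta> \<and> independent \<Sigma> \<and>
     (\<forall>\<beta>\<in>\<Delta>. nonneg_int_comb \<Sigma> \<beta> \<or> nonneg_int_comb \<Sigma> (- \<beta>))"

definition qproj :: "'a::euclidean_space set \<Rightarrow> 'a \<Rightarrow> 'a" where
  "qproj J v = (THE w. v - w \<in> span J \<and> (\<forall>j\<in>J. w \<bullet> j = 0))"

definition qrs_roots :: "'a::euclidean_space set \<Rightarrow> 'a set \<Rightarrow> 'a set" where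
  "qrs_roots \<Delta> J = qproj J ` \<Delta> - {0}"

definition qrs_base :: "'a::euclidean_space set \<Rightarrow> 'a set \<Rightarrow> 'a set" where
  "qrs_base \<Sigma> J = qproj J ` (\<Sigma> - J)"

definition qrs_pos :: "'a::euclidean_space set \<Rightarrow> 'a set \<Rightarrow> 'a set \<Rightarrow> 'a set" where
  "qrs_pos \<Delta> \<Sigma> J = {v \<in> qrs_roots \<Delta> J. nonneg_int_comb (qrs_base \<Sigma> J) v}"

definition closed_in_rs :: "'a::ab_group_add set \<Rightarrow> 'a set \<Rightarrow> bool" where
  "closed_in_rs R \<Phi> \<longleftrightarrow> (\<forall>\<alpha>\<in>\<Phi>. \<forall>\<beta>\<in>\<Phi>. \<alpha> + \<beta> \<in> R \<longrightarrow> \<alpha> + \<beta> \<in> \<Phi>)"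

definition inversion_set :: "'a::ab_group_add set \<Rightarrow> 'a set \<Rightarrow> 'a set \<Rightarrow> bool" where
  "inversion_set R Rpos \<Phi> \<longleftrightarrow> \<Phi> \<subseteq> Rpos \<and> closed_in_rs R \<Phi> \<and> closed_in_rs R (Rpos - \<Phi>)"

definition graph_edges :: "'a::ab_group_add set \<Rightarrow> 'a set \<Rightarrow> ('a \<times> 'a) set" where
  "graph_edges Rpos \<Phi> = {(a, b). a \<in> \<Phi> \<and> b \<in> \<Phi> \<and>
      (a - b \<in> Rpos - \<Phi> \<or> a - b \<in> uminus ` (Rpos - \<Phi>))}"

definition graph_components :: "'a::ab_group_add set \<Rightarrow> 'a set \<Rightarrow> 'a set set" where
  "graph_components Rpos \<Phi> = {{b. (a, b) \<in> (graph_edges Rpos \<Phi>)\<^sup>*} | a. a \<in> \<Phi>}"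

definition comp_add :: "'a::ab_group_add set \<Rightarrow> 'a set \<Rightarrow> 'a set \<Rightarrow> 'a set \<Rightarrow> 'a set \<Rightarrow> 'a set option" where
  "comp_add R Rpos \<Phi> A B =
    (let Z = {\<alpha> + \<beta> | \<alpha> \<beta>. \<alpha> \<in> A \<and> \<beta> \<in> B} \<inter> R;
         K = {C \<in> graph_components Rpos \<Phi>. Z \<inter> C \<noteq> {}} in
     if Z = {} then None
     else if (\<exists>C. K = {C}) then Some (THE C. K = {C})
     else if A = B \<and> (\<exists>C. C \<noteq> A \<and> K = {A, C}) then Some (THE C. C \<noteq> A \<and> K = {A, C})
     else None)"

fun std_sum :: "'a::ab_group_add set \<Rightarrow> 'a set \<Rightarrow> 'a set \<Rightarrow> 'a set \<Rightarrow> 'a set list \<Rightarrow> 'a set option" where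
  "std_sum R Rpos \<Phi> A [] = Some A"
| "std_sum R Rpos \<Phi> A (C # Cs) =
     (case comp_add R Rpos \<Phi> A C of None \<Rightarrow> None | Some A' \<Rightarrow> std_sum R Rpos \<Phi> A' Cs)"

definition comp_le :: "'a::ab_group_add set \<Rightarrow> 'a set \<Rightarrow> 'a set \<Rightarrow> ('a set \<times> 'a set) set" where
  "comp_le R Rpos \<Phi> = {(A, B). A \<in> graph_components Rpos \<Phi> \<and> B \<in> graph_components Rpos \<Phi> \<and>
      (\<exists>Cs. set Cs \<subseteq> graph_components Rpos \<Phi> \<and> std_sum R Rpos \<Phi> A Cs = Some B)}"

end

theory Submission
  imports Defs
begin


lemma comp_add_some:
  assumes "comp_add R Rpos Phi A C = Some D"
  shows "D \<in> graph_components Rpos Phi \<and> (\<exists>a\<in>A. \<exists>b\<in>C. a + b \<in> D)"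
proof -
  define Z where "Z = {\<alpha> + \<beta> | \<alpha> \<beta>. \<alpha> \<in> A \<and> \<beta> \<in> C} \<inter> R"
  define K where "K = {X \<in> graph_components Rpos Phi. Z \<inter> X \<noteq> {}}"
  have ca: "comp_add R Rpos Phi A C = (if Z = {} then None
     else if (\<exists>X. K = {X}) then Some (THE X. K = {X})
     else if A = C \<and> (\<exists>X. X \<noteq> A \<and> K = {A, X}) then Some (THE X. X \<noteq> A \<and> K = {A, X})
     else None)" unfolding comp_add_def Let_def Z_def K_def by simp
  have "D \<in> K"
  proof (cases "\<exists>X. K = {X}")
    case True
    then obtain X where X: "K = {X}" by blast
    have "(THE X. K = {X}) = X" using X by auto
    then show ?thesis using assms ca X by (auto split: if_splits)
  next
    case False
    then have "A = C \<and> (\<exists>X. X \<noteq> A \<and> K = {A, X})" using assms ca by (auto split: if_splits)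
    then obtain X where X: "X \<noteq> A" "K = {A, X}" by blast
    have "(THE X. X \<noteq> A \<and> K = {A, X}) = X"
      using X by (rule_tac the_equality) (auto simp: doubleton_eq_iff)
    then show ?thesis using assms ca X False by (auto split: if_splits)
  qed
  then show ?thesis unfolding K_def Z_def by blast
qed

lemma std_append:
  "std_sum R Rpos Phi A (xs @ ys) =
     (case std_sum R Rpos Phi A xs of None \<Rightarrow> None | Some B \<Rightarrow> std_sum R Rpos Phi B ys)"
  by (induction xs arbitrary: A) (auto split: option.split)

locale absQ =
  fixes R Rpos Phi :: "'a::real_inner set" and g :: "'a \<Rightarrow> real"
  assumes N: "\<And>x y. x \<in> R \<Longrightarrow> y \<in> R \<Longrightarrow> x \<noteq> - y \<Longrightarrow> x \<bullet> y < 0 \<Longrightarrow> x + y \<in> R"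
  and negR: "\<And>x. x \<in> R \<Longrightarrow> - x \<in> R"
  and zR: "0 \<notin> R"
  and posR: "Rpos \<subseteq> R"
  and Rsplit: "\<And>x. x \<in> R \<Longrightarrow> x \<in> Rpos \<or> - x \<in> Rpos"
  and gadd: "\<And>x y. g (x + y) = g x + g y"
  and gpos: "\<And>x. x \<in> Rpos \<Longrightarrow> g x > 0"
  and addpos: "\<And>x y. x \<in> Rpos \<Longrightarrow> y \<in> Rpos \<Longrightarrow> x + y \<in> R \<Longrightarrow> x + y \<in> Rpos"
  and finPhi: "finite Phi"
  and PhiPos: "Phi \<subseteq> Rpos"
  and closedPhi: "closed_in_rs R Phi"
begin

lemma gneg: "g (- x) = - g x"
  using gadd[of x "- x"] gadd[of 0 0] by simp

lemma pos_not_neg: "x \<in> Rpos \<Longrightarrow> y \<in> Rpos \<Longrightarrow> x \<noteq> - y"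
proof
  assume "x \<in> Rpos" "y \<in> Rpos" "x = - y"
  then have "g x = - g y" "g x > 0" "g y > 0" using gneg gpos by blast+
  then show False by linarith
qed

lemma pos_sum_ne0: "x \<in> Rpos \<Longrightarrow> y \<in> Rpos \<Longrightarrow> x + y \<noteq> 0"
  using pos_not_neg eq_neg_iff_add_eq_0 by blast

lemma Nle: "x \<in> R \<Longrightarrow> y \<in> R \<Longrightarrow> x \<noteq> - y \<Longrightarrow> x + y \<notin> R \<Longrightarrow> x \<bullet> y \<ge> 0"
  using N by force

lemma closedD: "x \<in> Phi \<Longrightarrow> y \<in> Phi \<Longrightarrow> x + y \<in> R \<Longrightarrow> x + y \<in> Phi"
  using closedPhi unfolding closed_in_rs_def by blast

lemma step_lemma:
  assumes x: "x \<in> Phi" and y: "y \<in> Phi" and b: "b \<in> Phi"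
  and d: "y - x \<in> Rpos - Phi \<or> x - y \<in> Rpos - Phi"
  and yb: "y + b \<in> R"
  and na1: "x - (y + b) \<notin> Rpos - Phi" and na2: "(y + b) - x \<notin> Rpos - Phi"
  shows "x + b \<in> R \<or> b + (y - x) \<in> Phi"
proof (rule ccontr)
  assume H: "\<not> ?thesis"
  hence xb: "x + b \<notin> R" and bd: "b + (y - x) \<notin> Phi" by auto
  have xR: "x \<in> R" "y \<in> R" "b \<in> R" and xP: "x \<in> Rpos" "y \<in> Rpos" "b \<in> Rpos"
    using x y b PhiPos posR by auto
  from d show False
  proof
    assume gg: "y - x \<in> Rpos - Phi"
    define c where "c = y - x"
    have gR: "c \<in> R" "c \<in> Rpos" "c \<notin> Phi" using gg posR c_def by auto
    have yeq: "y = x + c" by (simp add: c_def)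
    have bg: "c + b \<notin> R"
    proof
      assume "c + b \<in> R"
      hence "c + b \<in> Rpos" using addpos xP gR by auto
      moreover have "c + b \<notin> Phi" using bd c_def by (simp add: add.commute)
      ultimately have "(y + b) - x \<in> Rpos - Phi" by (simp add: c_def algebra_simps)
      thus False using na2 by simp
    qed
    have s: "x + c + b \<in> R" using yb yeq by simp
    have 1: "x \<bullet> b \<ge> 0" using Nle[of x b] xR xb pos_not_neg xP by auto
    have 2: "c \<bullet> b \<ge> 0" using Nle[of c b] xR gR bg pos_not_neg xP by auto
    have 3: "(x + c + b) \<bullet> (- x) \<ge> 0"
    proof (rule Nle)
      show "x + c + b \<noteq> - (- x)" using pos_sum_ne0[of c b] gR xP by (auto simp: algebra_simps)
      show "x + c + b + - x \<notin> R" using bg by (simp add: algebra_simps)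
    qed (use s negR xR in auto)
    have 4: "(x + c + b) \<bullet> (- c) \<ge> 0"
    proof (rule Nle)
      show "x + c + b \<noteq> - (- c)" using pos_sum_ne0[of x b] xP by (auto simp: algebra_simps)
      show "x + c + b + - c \<notin> R" using xb by (simp add: algebra_simps)
    qed (use s negR gR in auto)
    have "(x + c) \<bullet> (x + c) \<le> 0"
      using 1 2 3 4 by (simp add: inner_simps inner_commute)
    hence "x + c = 0" by (metis antisym inner_ge_zero inner_eq_zero_iff)
    thus False using yeq xR zR by simp
  next
    assume gg: "x - y \<in> Rpos - Phi"
    define c where "c = x - y"
    have gR: "c \<in> R" "c \<in> Rpos" "c \<notin> Phi" using gg posR c_def by auto
    have xeq: "x = y + c" by (simp add: c_def)
    have bc: "b + (y - x) = b - c" by (simp add: c_def)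
    have bg: "b - c \<notin> R"
    proof
      assume bcR: "b - c \<in> R"
      from Rsplit[OF bcR] show False
      proof
        assume "b - c \<in> Rpos"
        moreover have "b - c \<notin> Phi" using bd bc by simp
        ultimately have "(y + b) - x \<in> Rpos - Phi" by (simp add: xeq algebra_simps)
        thus False using na2 by simp
      next
        assume cb: "- (b - c) \<in> Rpos"
        show False
        proof (cases "c - b \<in> Phi")
          case True
          have "(c - b) + b \<in> Phi" using closedD[OF True b] gR by simp
          thus False using gR by simp
        next
          case False
          hence "x - (y + b) \<in> Rpos - Phi" using cb by (simp add: xeq algebra_simps)
          thus False using na1 by simp
        qed
      qed
    qed
    have bnc: "b \<noteq> c" using b gR by auto
    have ybP: "y + b \<in> Rpos" using addpos xP yb by auto
    have 1: "b \<bullet> (- c) \<ge> 0"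
    proof (rule Nle)
      show "b \<noteq> - (- c)" using bnc by simp
      show "b + - c \<notin> R" using bg by simp
    qed (use xR negR gR in auto)
    have 2: "x \<bullet> b \<ge> 0" using Nle[of x b] xR xb pos_not_neg xP by auto
    have 3: "(y + b) \<bullet> c \<ge> 0"
    proof (rule Nle)
      show "y + b \<noteq> - c" using pos_not_neg ybP gR by auto
      show "y + b + c \<notin> R" using xb by (simp add: xeq algebra_simps)
    qed (use yb gR in auto)
    have 4: "(y + b) \<bullet> (- x) \<ge> 0"
    proof (rule Nle)
      show "y + b \<noteq> - (- x)" using bnc by (auto simp: xeq)
      show "y + b + - x \<notin> R" using bg by (simp add: xeq algebra_simps)
    qed (use yb negR xR in auto)
    have "y \<bullet> y \<le> 0"
      using 1 2 3 4 unfolding xeq by (simp add: inner_simps inner_commute)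
    hence "y = 0" by (metis antisym inner_ge_zero inner_eq_zero_iff)
    thus False using xR zR by simp
  qed
qed


abbreviation "E \<equiv> graph_edges Rpos Phi"
abbreviation "comps \<equiv> graph_components Rpos Phi"

lemma E_iff: "(a, b) \<in> E \<longleftrightarrow> a \<in> Phi \<and> b \<in> Phi \<and> (a - b \<in> Rpos - Phi \<or> b - a \<in> Rpos - Phi)"
proof -
  have "a - b \<in> uminus ` (Rpos - Phi) \<longleftrightarrow> b - a \<in> Rpos - Phi"
  proof
    assume "a - b \<in> uminus ` (Rpos - Phi)"
    then obtain x where "x \<in> Rpos - Phi" "a - b = - x" by auto
    moreover then have "x = b - a" by (metis minus_diff_eq minus_minus)
    ultimately show "b - a \<in> Rpos - Phi" by simp
  next
    assume "b - a \<in> Rpos - Phi"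
    then show "a - b \<in> uminus ` (Rpos - Phi)" by (rule rev_image_eqI) simp
  qed
  then show ?thesis unfolding graph_edges_def by auto
qed

lemma E_sym: "(a, b) \<in> E \<Longrightarrow> (b, a) \<in> E"
  using E_iff by blast

lemma rt_sym: "(a, b) \<in> E\<^sup>* \<Longrightarrow> (b, a) \<in> E\<^sup>*"
proof (induction rule: rtrancl_induct)
  case (step y z)
  then show ?case using E_sym by (meson converse_rtrancl_into_rtrancl)
qed simp

lemma rt_Phi: "(a, b) \<in> E\<^sup>* \<Longrightarrow> a \<in> Phi \<Longrightarrow> b \<in> Phi"
  by (induction rule: rtrancl_induct) (auto simp: E_iff)

lemma comp_repr: "X \<in> comps \<Longrightarrow> u \<in> X \<Longrightarrow> X = {b. (u, b) \<in> E\<^sup>*}"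
proof -
  assume X: "X \<in> comps" and u: "u \<in> X"
  then obtain a where a: "a \<in> Phi" "X = {b. (a, b) \<in> E\<^sup>*}"
    unfolding graph_components_def by blast
  then have au: "(a, u) \<in> E\<^sup>*" using u by blast
  then have ua: "(u, a) \<in> E\<^sup>*" using rt_sym by blast
  show ?thesis using a au ua by (auto intro: rtrancl_trans)
qed

lemma comp_sub: "X \<in> comps \<Longrightarrow> X \<subseteq> Phi"
  unfolding graph_components_def using rt_Phi by blast

lemma comp_ne: "X \<in> comps \<Longrightarrow> X \<noteq> {}"
  unfolding graph_components_def by blast

lemma comp_fin: "X \<in> comps \<Longrightarrow> finite X"
  using comp_sub finPhi finite_subset by blast

lemma comp_conn: "X \<in> comps \<Longrightarrow> u \<in> X \<Longrightarrow> v \<in> X \<Longrightarrow> (u, v) \<in> E\<^sup>*"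
  using comp_repr by blast

lemma comp_closed: "X \<in> comps \<Longrightarrow> u \<in> X \<Longrightarrow> (u, v) \<in> E\<^sup>* \<Longrightarrow> v \<in> X"
  using comp_repr by blast

lemma comp_adj: "X \<in> comps \<Longrightarrow> Y \<in> comps \<Longrightarrow> u \<in> X \<Longrightarrow> v \<in> Y \<Longrightarrow> (u, v) \<in> E \<Longrightarrow> X = Y"
proof -
  assume X: "X \<in> comps" and Y: "Y \<in> comps" and u: "u \<in> X" and v: "v \<in> Y" and uv: "(u, v) \<in> E"
  have "v \<in> X" using comp_closed[OF X u] uv by blast
  then have "X = {b. (v, b) \<in> E\<^sup>*}" using comp_repr[OF X] by blast
  also have "\<dots> = Y" using comp_repr[OF Y v] by blast
  finally show ?thesis .
qed

lemma transport:
  assumes A: "A \<in> comps" and C: "C \<in> comps" and D: "D \<in> comps" and DA: "D \<noteq> A"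
    and a0: "a0 \<in> A" and b0: "b0 \<in> C" and s0: "a0 + b0 \<in> D" and al: "al \<in> A"
  shows "\<exists>b\<in>C. al + b \<in> D"
proof -
  have "(a0, al) \<in> E\<^sup>*" using comp_conn[OF A a0 al] .
  then show ?thesis
  proof (induction rule: rtrancl_induct)
    case base
    then show ?case using b0 s0 by blast
  next
    case (step y z)
    from step.IH obtain b where b: "b \<in> C" "y + b \<in> D" by blast
    have yA: "y \<in> A" using comp_closed[OF A a0 step.hyps(1)] .
    have zA: "z \<in> A" using comp_closed[OF A yA] step.hyps(2) by blast
    have yP: "y \<in> Phi" and zP: "z \<in> Phi" and bP: "b \<in> Phi" and ybP: "y + b \<in> Phi"
      using comp_sub A C D yA zA b by blast+
    have d: "y - z \<in> Rpos - Phi \<or> z - y \<in> Rpos - Phi" using step.hyps(2) E_iff by blast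
    have ybR: "y + b \<in> R" using ybP PhiPos posR by blast
    have na: "z - (y + b) \<notin> Rpos - Phi \<and> (y + b) - z \<notin> Rpos - Phi"
    proof (rule ccontr)
      assume "\<not> ?thesis"
      then have "(z, y + b) \<in> E" using E_iff zP ybP by blast
      then have "A = D" using comp_adj[OF A D zA b(2)] by blast
      then show False using DA by simp
    qed
    from step_lemma[OF zP yP bP d ybR] na
    have "z + b \<in> R \<or> b + (y - z) \<in> Phi" by blast
    then show ?case
    proof
      assume zb: "z + b \<in> R"
      then have zbP: "z + b \<in> Phi" using closedD zP bP by blast
      have "(y + b, z + b) \<in> E" using E_iff ybP zbP d by (simp add: algebra_simps)
      then have "z + b \<in> D" using comp_closed[OF D b(2)] by blast
      then show ?thesis using b by blast
    next
      assume b': "b + (y - z) \<in> Phi"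
      have e1: "b - (b + (y - z)) = z - y" "b + (y - z) - b = y - z" by (simp_all add: algebra_simps)
      have "(b, b + (y - z)) \<in> E" unfolding E_iff e1 using bP b' d by blast
      then have "b + (y - z) \<in> C" using comp_closed[OF C b(1)] by blast
      moreover have "z + (b + (y - z)) = y + b" by (simp add: algebra_simps)
      ultimately show ?thesis using b by metis
    qed
  qed
qed

definition mh :: "'a set \<Rightarrow> real" where "mh X = Max (g ` X)"

lemma strict:
  assumes A: "A \<in> comps" and C: "C \<in> comps"
    and ad: "comp_add R Rpos Phi A C = Some D" and DA: "D \<noteq> A"
  shows "mh A < mh D"
proof -
  from comp_add_some[OF ad] obtain a0 b0 where D: "D \<in> comps" and a0: "a0 \<in> A" and b0: "b0 \<in> C"
    and s0: "a0 + b0 \<in> D" by blast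
  have "mh A \<in> g ` A" unfolding mh_def using comp_fin[OF A] comp_ne[OF A] by simp
  then obtain al where al: "al \<in> A" "g al = mh A" by auto
  from transport[OF A C D DA a0 b0 s0 al(1)] obtain b where b: "b \<in> C" "al + b \<in> D" by blast
  have "g b > 0" using b comp_sub[OF C] PhiPos gpos by blast
  then have "g (al + b) > mh A" using al gadd by simp
  moreover have "g (al + b) \<le> mh D" unfolding mh_def using comp_fin[OF D] b by simp
  ultimately show ?thesis by simp
qed

lemma std_mono:
  "A \<in> comps \<Longrightarrow> set Cs \<subseteq> comps \<Longrightarrow> std_sum R Rpos Phi A Cs = Some B
    \<Longrightarrow> B \<in> comps \<and> (A = B \<or> mh A < mh B)"
proof (induction Cs arbitrary: A)
  case Nil
  then show ?case by simp
next
  case (Cons C Cs)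
  from Cons.prems obtain A' where ad: "comp_add R Rpos Phi A C = Some A'"
    and rest: "std_sum R Rpos Phi A' Cs = Some B"
    by (auto split: option.splits)
  have A': "A' \<in> comps" using comp_add_some[OF ad] by blast
  have IH: "B \<in> comps \<and> (A' = B \<or> mh A' < mh B)" using Cons.IH[OF A' _ rest] Cons.prems by simp
  show ?case
  proof (cases "A' = A")
    case True
    then show ?thesis using IH by simp
  next
    case False
    then have "mh A < mh A'" using strict[OF _ _ ad] Cons.prems by simp
    then show ?thesis using IH by auto
  qed
qed

theorem abs_main: "partial_order_on comps (comp_le R Rpos Phi)"
  unfolding partial_order_on_def preorder_on_def
proof (intro conjI)
  show "comp_le R Rpos Phi \<subseteq> comps \<times> comps" unfolding comp_le_def by auto
  show "refl_on comps (comp_le R Rpos Phi)"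
    unfolding refl_on_def comp_le_def by (auto intro!: exI[of _ "[]"])
  show "trans (comp_le R Rpos Phi)"
  proof (rule transI)
    fix x y z assume xy: "(x, y) \<in> comp_le R Rpos Phi" and yz: "(y, z) \<in> comp_le R Rpos Phi"
    from xy obtain Cs1 where 1: "x \<in> comps" "set Cs1 \<subseteq> comps" "std_sum R Rpos Phi x Cs1 = Some y"
      unfolding comp_le_def by blast
    from yz obtain Cs2 where 2: "z \<in> comps" "set Cs2 \<subseteq> comps" "std_sum R Rpos Phi y Cs2 = Some z"
      unfolding comp_le_def by blast
    have "std_sum R Rpos Phi x (Cs1 @ Cs2) = Some z" using 1 2 by (simp add: std_append)
    moreover have "set (Cs1 @ Cs2) \<subseteq> comps" using 1 2 by simp
    ultimately show "(x, z) \<in> comp_le R Rpos Phi" using 1 2 unfolding comp_le_def by blast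
  qed
  show "antisym (comp_le R Rpos Phi)"
  proof (rule antisymI)
    fix x y assume xy: "(x, y) \<in> comp_le R Rpos Phi" and yx: "(y, x) \<in> comp_le R Rpos Phi"
    from xy obtain Cs1 where 1: "x \<in> comps" "set Cs1 \<subseteq> comps" "std_sum R Rpos Phi x Cs1 = Some y"
      unfolding comp_le_def by blast
    from yx obtain Cs2 where 2: "y \<in> comps" "set Cs2 \<subseteq> comps" "std_sum R Rpos Phi y Cs2 = Some x"
      unfolding comp_le_def by blast
    show "x = y" using std_mono[OF 1] std_mono[OF 2] by auto
  qed
qed

end



section \<open>Orthogonal projection\<close>

lemma orth_span: "(\<forall>j\<in>J. w \<bullet> j = 0) \<Longrightarrow> u \<in> span J \<Longrightarrow> w \<bullet> u = 0"
  using orthogonal_to_span[of u J w] unfolding orthogonal_def by blast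

lemma qproj_ex:
  fixes J :: "'a::euclidean_space set"
  shows "\<exists>w. v - w \<in> span J \<and> (\<forall>j\<in>J. w \<bullet> j = 0)"
proof -
  obtain y z where y: "y \<in> span J" and z: "\<And>w. w \<in> span J \<Longrightarrow> orthogonal z w" and v: "v = y + z"
    using orthogonal_subspace_decomp_exists[of J v] by blast
  have "v - z \<in> span J" using y v by simp
  moreover have "\<forall>j\<in>J. z \<bullet> j = 0" using z span_base unfolding orthogonal_def by blast
  ultimately show ?thesis by blast
qed

lemma qproj_uniq:
  fixes J :: "'a::euclidean_space set"
  assumes "v - w1 \<in> span J" "\<forall>j\<in>J. w1 \<bullet> j = 0" "v - w2 \<in> span J" "\<forall>j\<in>J. w2 \<bullet> j = 0"
  shows "w1 = w2"
proof -
  have d: "w1 - w2 \<in> span J" using span_diff[OF assms(3) assms(1)] by (simp add: algebra_simps)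
  have "\<forall>j\<in>J. (w1 - w2) \<bullet> j = 0" using assms(2,4) by (simp add: inner_diff_left)
  then have "(w1 - w2) \<bullet> (w1 - w2) = 0" using orth_span d by blast
  then show ?thesis by simp
qed

lemma qproj_eq:
  fixes J :: "'a::euclidean_space set"
  assumes "v - w \<in> span J" "\<forall>j\<in>J. w \<bullet> j = 0"
  shows "qproj J v = w"
  unfolding qproj_def
proof (rule the_equality)
  show "v - w \<in> span J \<and> (\<forall>j\<in>J. w \<bullet> j = 0)" using assms by blast
  fix w' assume "v - w' \<in> span J \<and> (\<forall>j\<in>J. w' \<bullet> j = 0)"
  then show "w' = w" using qproj_uniq[of v w' J w] assms by blast
qed

lemma qproj_props:
  fixes J :: "'a::euclidean_space set"
  shows "v - qproj J v \<in> span J" "\<forall>j\<in>J. qproj J v \<bullet> j = 0"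
proof -
  obtain w where w: "v - w \<in> span J" "\<forall>j\<in>J. w \<bullet> j = 0" using qproj_ex by blast
  then have e: "qproj J v = w" by (rule qproj_eq)
  show "v - qproj J v \<in> span J" unfolding e by (rule w(1))
  show "\<forall>j\<in>J. qproj J v \<bullet> j = 0" unfolding e by (rule w(2))
qed

lemma qproj_orth:
  fixes J :: "'a::euclidean_space set"
  shows "u \<in> span J \<Longrightarrow> qproj J v \<bullet> u = 0"
  using orth_span[OF qproj_props(2)] by blast

lemma qproj_span0:
  fixes J :: "'a::euclidean_space set"
  shows "u \<in> span J \<Longrightarrow> qproj J u = 0"
  by (rule qproj_eq) simp_all

lemma qproj_linear:
  fixes J :: "'a::euclidean_space set"
  shows "linear (qproj J)"
proof (rule linearI)
  fix x y
  show "qproj J (x + y) = qproj J x + qproj J y"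
  proof (rule qproj_eq)
    have "(x - qproj J x) + (y - qproj J y) \<in> span J"
      using qproj_props(1)[of x J] qproj_props(1)[of y J] by (rule span_add)
    then show "x + y - (qproj J x + qproj J y) \<in> span J" by (simp add: algebra_simps)
    show "\<forall>j\<in>J. (qproj J x + qproj J y) \<bullet> j = 0" using qproj_props(2)[of J x] qproj_props(2)[of J y] by (simp add: inner_add_left)
  qed
next
  fix c :: real and x
  show "qproj J (c *\<^sub>R x) = c *\<^sub>R qproj J x"
  proof (rule qproj_eq)
    have "c *\<^sub>R (x - qproj J x) \<in> span J"
      using qproj_props(1)[of x J] by (rule span_mul)
    then show "c *\<^sub>R x - c *\<^sub>R qproj J x \<in> span J" by (simp add: algebra_simps)
    show "\<forall>j\<in>J. (c *\<^sub>R qproj J x) \<bullet> j = 0" using qproj_props(2)[of J x] by simp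
  qed
qed

lemma qproj_neg:
  fixes J :: "'a::euclidean_space set"
  shows "qproj J (- x) = - qproj J x"
  using linear_neg[OF qproj_linear] by blast

lemma qproj_add:
  fixes J :: "'a::euclidean_space set"
  shows "qproj J (x + y) = qproj J x + qproj J y"
  using linear_add[OF qproj_linear] by blast



section \<open>Root systems\<close>

lemma rs_zero: "root_system \<Delta> \<Longrightarrow> 0 \<notin> \<Delta>"
  unfolding root_system_def by blast

lemma rs_fin: "root_system \<Delta> \<Longrightarrow> finite \<Delta>"
  unfolding root_system_def by blast

lemma rs_refl:
  "root_system \<Delta> \<Longrightarrow> a \<in> \<Delta> \<Longrightarrow> b \<in> \<Delta> \<Longrightarrow> b - (2 * (b \<bullet> a) / (a \<bullet> a)) *\<^sub>R a \<in> \<Delta>"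
  unfolding root_system_def by blast

lemma rs_int:
  "root_system \<Delta> \<Longrightarrow> a \<in> \<Delta> \<Longrightarrow> b \<in> \<Delta> \<Longrightarrow> 2 * (b \<bullet> a) / (a \<bullet> a) \<in> \<int>"
  unfolding root_system_def by blast

lemma rs_red:
  "root_system \<Delta> \<Longrightarrow> a \<in> \<Delta> \<Longrightarrow> c *\<^sub>R a \<in> \<Delta> \<Longrightarrow> c = 1 \<or> c = -1"
  unfolding root_system_def by blast

lemma rs_neg:
  assumes "root_system \<Delta>" "a \<in> \<Delta>" shows "- a \<in> \<Delta>"
proof -
  have "a \<noteq> 0" using assms rs_zero by blast
  then have "a \<bullet> a \<noteq> 0" by simp
  then have "a - (2 * (a \<bullet> a) / (a \<bullet> a)) *\<^sub>R a = - a" by (simp add: scaleR_2)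
  then show ?thesis using rs_refl[OF assms(1,2,2)] by simp
qed

lemma int_neg_cases:
  fixes m :: real
  assumes "m \<in> \<int>" "m < 0"
  shows "m = -1 \<or> m \<le> -2"
proof -
  obtain k where k: "m = of_int k" using assms(1) Ints_cases by blast
  then have "k < 0" using assms(2) by simp
  then have "k = -1 \<or> k \<le> -2" by linarith
  then show ?thesis using k by auto
qed

lemma rs_sum:
  fixes \<Delta> :: "'a::euclidean_space set"
  assumes rs: "root_system \<Delta>" and a: "a \<in> \<Delta>" and b: "b \<in> \<Delta>" and ne: "a \<noteq> - b"
    and neg: "a \<bullet> b < 0"
  shows "a + b \<in> \<Delta>"
proof -
  have a0: "a \<noteq> 0" and b0: "b \<noteq> 0" using rs a b rs_zero by blast+
  have aa: "a \<bullet> a > 0" and bb: "b \<bullet> b > 0" using a0 b0 by auto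
  define m where "m = 2 * (b \<bullet> a) / (a \<bullet> a)"
  define n where "n = 2 * (a \<bullet> b) / (b \<bullet> b)"
  have mI: "m \<in> \<int>" and nI: "n \<in> \<int>" using rs_int[OF rs a b] rs_int[OF rs b a] m_def n_def by auto
  have mneg: "m < 0" using neg aa unfolding m_def by (simp add: inner_commute divide_neg_pos)
  have nneg: "n < 0" using neg bb unfolding n_def by (simp add: divide_neg_pos)
  consider "m = -1" | "n = -1" | "m \<le> -2" "n \<le> -2"
    using int_neg_cases[OF mI mneg] int_neg_cases[OF nI nneg] by blast
  then show ?thesis
  proof cases
    case 1
    have "b - m *\<^sub>R a \<in> \<Delta>" using rs_refl[OF rs a b] m_def by simp
    then show ?thesis using 1 by (simp add: add.commute)
  next
    case 2
    have "a - n *\<^sub>R b \<in> \<Delta>" using rs_refl[OF rs b a] n_def by simp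
    then show ?thesis using 2 by simp
  next
    case 3
    have ma: "m * (a \<bullet> a) = 2 * (a \<bullet> b)" unfolding m_def using aa by (simp add: inner_commute)
    have nb: "n * (b \<bullet> b) = 2 * (a \<bullet> b)" unfolding n_def using bb by simp
    have "2 * (a \<bullet> a) \<le> (- m) * (a \<bullet> a)" using 3 aa by (intro mult_right_mono) auto
    then have h1: "a \<bullet> a \<le> - (a \<bullet> b)" using ma by linarith
    have "2 * (b \<bullet> b) \<le> (- n) * (b \<bullet> b)" using 3 bb by (intro mult_right_mono) auto
    then have h2: "b \<bullet> b \<le> - (a \<bullet> b)" using nb by linarith
    have cs: "\<bar>a \<bullet> b\<bar> \<le> norm a * norm b" by (rule Cauchy_Schwarz_ineq2)
    have ab: "\<bar>a \<bullet> b\<bar> = - (a \<bullet> b)" using neg by simp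
    have na: "a \<bullet> a = norm a * norm a" and nbb: "b \<bullet> b = norm b * norm b"
      by (simp_all add: power2_norm_eq_inner[symmetric] power2_eq_square)
    have pa: "norm a > 0" and pb: "norm b > 0" using a0 b0 by simp_all
    have "norm a * norm a \<le> norm a * norm b" using h1 cs ab na by linarith
    then have le1: "norm a \<le> norm b" using pa by simp
    have "norm b * norm b \<le> norm b * norm a" using h2 cs ab nbb by (simp add: mult.commute) 
    then have le2: "norm b \<le> norm a" using pb by simp
    have eqn: "norm a = norm b" using le1 le2 by simp
    have "\<bar>a \<bullet> b\<bar> = norm a * norm b" using cs h1 ab na eqn by simp
    then have "norm a *\<^sub>R b = norm b *\<^sub>R a \<or> norm a *\<^sub>R b = - norm b *\<^sub>R a"
      using norm_cauchy_schwarz_abs_eq by blast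
    then have "norm b *\<^sub>R b = norm b *\<^sub>R a \<or> norm b *\<^sub>R b = norm b *\<^sub>R (- a)"
      using eqn by simp
    then have "b = a \<or> b = - a" using pb by (metis less_irrefl scaleR_cancel_left)
    then show ?thesis
    proof
      assume "b = a"
      then show ?thesis using neg aa by simp
    next
      assume "b = - a"
      then show ?thesis using ne by simp
    qed
  qed
qed




definition rfl :: "'a::real_inner \<Rightarrow> 'a \<Rightarrow> 'a" where
  "rfl j z = z - (2 * (z \<bullet> j) / (j \<bullet> j)) *\<^sub>R j"

inductive_set orb :: "'a::real_inner set \<Rightarrow> 'a \<Rightarrow> 'a set" for Jr y0 where
  orb_base: "y0 \<in> orb Jr y0"
| orb_step: "z \<in> orb Jr y0 \<Longrightarrow> j \<in> Jr \<Longrightarrow> rfl j z \<in> orb Jr y0"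

lemma rfl_rfl: "j \<noteq> 0 \<Longrightarrow> rfl j (rfl j z) = z"
proof -
  assume j: "j \<noteq> 0"
  then have jj: "j \<bullet> j \<noteq> 0" by simp
  have "rfl j z \<bullet> j = - (z \<bullet> j)" unfolding rfl_def using jj by (simp add: inner_diff_left)
  then show ?thesis unfolding rfl_def by (simp add: rfl_def)
qed

lemma rfl_linear: "linear (rfl j)"
proof (rule linearI)
  fix x y show "rfl j (x + y) = rfl j x + rfl j y"
    unfolding rfl_def by (simp add: inner_add_left add_divide_distrib distrib_left scaleR_add_left algebra_simps)
next
  fix c :: real and x show "rfl j (c *\<^sub>R x) = c *\<^sub>R rfl j x"
    unfolding rfl_def by (simp add: algebra_simps)
qed

lemma qrs_N:
  fixes \<Delta> J :: "'a::euclidean_space set"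
  assumes rs: "root_system \<Delta>" and JD: "J \<subseteq> \<Delta>"
    and x: "x \<in> qrs_roots \<Delta> J" and y: "y \<in> qrs_roots \<Delta> J" and ne: "x \<noteq> - y" and neg: "x \<bullet> y < 0"
  shows "x + y \<in> qrs_roots \<Delta> J"
proof -
  obtain xt where xt: "xt \<in> \<Delta>" "x = qproj J xt" using x unfolding qrs_roots_def by blast
  obtain yt where yt: "yt \<in> \<Delta>" "y = qproj J yt" using y unfolding qrs_roots_def by blast
  define Ob where "Ob = orb J yt"
  have j0: "\<And>j. j \<in> J \<Longrightarrow> j \<noteq> 0" using JD rs rs_zero by blast
  have ObD: "Ob \<subseteq> \<Delta>"
  proof
    fix z assume "z \<in> Ob"
    then show "z \<in> \<Delta>" unfolding Ob_def
    proof (induction rule: orb.induct)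
      case orb_base then show ?case using yt by simp
    next
      case (orb_step z j) then show ?case using rs_refl[OF rs, of j z] JD unfolding rfl_def by blast
    qed
  qed
  have finOb: "finite Ob" using ObD rs_fin[OF rs] finite_subset by blast
  have ytOb: "yt \<in> Ob" unfolding Ob_def by (rule orb_base)
  have yperp: "\<forall>j\<in>J. y \<bullet> j = 0" using yt qproj_props(2) by blast
  have Ospan: "\<And>z. z \<in> Ob \<Longrightarrow> z - y \<in> span J"
  proof -
    fix z assume "z \<in> Ob"
    then show "z - y \<in> span J" unfolding Ob_def
    proof (induction rule: orb.induct)
      case orb_base then show ?case using yt qproj_props(1) by blast
    next
      case (orb_step z j)
      have "(z - y) - (2 * (z \<bullet> j) / (j \<bullet> j)) *\<^sub>R j \<in> span J"
        using orb_step span_diff span_mul span_base by metis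
      then show ?case unfolding rfl_def by (simp add: algebra_simps)
    qed
  qed
  define S where "S = sum id Ob"
  have Sperp: "S \<bullet> j = 0" if j: "j \<in> J" for j
  proof -
    have inj: "inj_on (rfl j) Ob" using rfl_rfl[OF j0[OF j]] by (metis inj_on_inverseI)
    have img: "rfl j ` Ob = Ob"
    proof
      show "rfl j ` Ob \<subseteq> Ob" unfolding Ob_def using orb_step j by blast
      show "Ob \<subseteq> rfl j ` Ob"
      proof
        fix z assume z: "z \<in> Ob"
        have "rfl j z \<in> Ob" unfolding Ob_def using orb_step j z Ob_def by blast
        then show "z \<in> rfl j ` Ob" using rfl_rfl[OF j0[OF j], of z] by (metis image_eqI)
      qed
    qed
    have "rfl j S = sum (rfl j) Ob" unfolding S_def
      by (simp add: linear_sum[OF rfl_linear] o_def)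
    also have "\<dots> = sum id (rfl j ` Ob)" using sum.reindex[OF inj, of id] by (simp add: o_def)
    also have "\<dots> = S" using img S_def by simp
    finally have "rfl j S = S" .
    then have "(2 * (S \<bullet> j) / (j \<bullet> j)) *\<^sub>R j = 0" unfolding rfl_def by simp
    then show ?thesis using j0[OF j] by simp
  qed
  define T where "T = sum (\<lambda>z. z - y) Ob"
  have Tspan: "T \<in> span J" unfolding T_def using Ospan by (simp add: span_sum)
  have TS: "T = S - of_nat (card Ob) *\<^sub>R y" unfolding T_def S_def
    by (simp add: sum_subtractf sum_constant_scaleR)
  have "\<forall>j\<in>J. T \<bullet> j = 0" using Sperp yperp TS by (simp add: inner_diff_left)
  then have "T \<bullet> T = 0" using orth_span Tspan by blast
  then have T0: "T = 0" by simp
  define p where "p = xt - x"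
  have pspan: "p \<in> span J" using xt qproj_props(1) p_def by blast
  have "(\<Sum>z\<in>Ob. p \<bullet> (z - y)) = p \<bullet> T" unfolding T_def by (simp add: inner_sum_right)
  then have sum0: "(\<Sum>z\<in>Ob. p \<bullet> (z - y)) = 0" using T0 by simp
  have "\<exists>z\<in>Ob. p \<bullet> (z - y) \<le> 0"
  proof (rule ccontr)
    assume "\<not> ?thesis"
    then have "\<forall>z\<in>Ob. p \<bullet> (z - y) > 0" by auto
    then have "(\<Sum>z\<in>Ob. p \<bullet> (z - y)) > 0" using finOb ytOb by (intro sum_pos) auto
    then show False using sum0 by simp
  qed
  then obtain z where z: "z \<in> Ob" "p \<bullet> (z - y) \<le> 0" by blast
  have zD: "z \<in> \<Delta>" using z ObD by blast
  have x1: "x \<bullet> (z - y) = 0" using xt qproj_orth Ospan[OF z(1)] by blast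
  have x2: "p \<bullet> y = 0" using yt qproj_orth[OF pspan] by (simp add: inner_commute)
  have "xt \<bullet> z = (x + p) \<bullet> (y + (z - y))" unfolding p_def by simp
  also have "\<dots> = x \<bullet> y + x \<bullet> (z - y) + p \<bullet> y + p \<bullet> (z - y)"
    by (simp add: inner_add_left inner_add_right inner_diff_right)
  finally have "xt \<bullet> z < 0" using x1 x2 z(2) neg by simp
  have pz: "qproj J z = y" by (rule qproj_eq) (use Ospan[OF z(1)] yperp in auto)
  have "xt \<noteq> - z"
  proof
    assume "xt = - z"
    then have "x = qproj J (- z)" using xt(2) by simp
    then have "x = - y" using pz qproj_neg[of J z] by simp
    then show False using ne by simp
  qed
  then have "xt + z \<in> \<Delta>" using rs_sum[OF rs xt(1) zD] \<open>xt \<bullet> z < 0\<close> by blast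
  moreover have "qproj J (xt + z) = x + y" using qproj_add[of J xt z] xt(2) pz by simp
  moreover have "x + y \<noteq> 0" using ne by (simp add: eq_neg_iff_add_eq_0)
  ultimately show ?thesis unfolding qrs_roots_def by (intro DiffI) (auto intro: rev_image_eqI)
qed




lemma proj_comb:
  fixes S J :: "'a::euclidean_space set"
  assumes fin: "finite S" and nc: "nonneg_int_comb S v"
  shows "nonneg_int_comb (qrs_base S J) (qproj J v)"
proof -
  obtain c where c: "\<forall>b\<in>S. c b \<in> \<int> \<and> c b \<ge> 0" "v = (\<Sum>b\<in>S. c b *\<^sub>R b)"
    using nc unfolding nonneg_int_comb_def by blast
  let ?p = "qproj J"
  have "?p v = (\<Sum>b\<in>S. c b *\<^sub>R ?p b)"
    using c(2) by (simp add: real_vector.linear_sum[OF qproj_linear] linear_cmul[OF qproj_linear])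
  also have "\<dots> = (\<Sum>b\<in>S - J. c b *\<^sub>R ?p b)"
    by (rule sum.mono_neutral_right) (use fin in \<open>auto simp: qproj_span0 span_base\<close>)
  also have "\<dots> = (\<Sum>u\<in>?p ` (S - J). \<Sum>b\<in>{x. x \<in> S - J \<and> ?p x = u}. c b *\<^sub>R ?p b)"
    by (rule sum.image_gen) (use fin in simp)
  also have "\<dots> = (\<Sum>u\<in>?p ` (S - J). (\<Sum>b\<in>{x. x \<in> S - J \<and> ?p x = u}. c b) *\<^sub>R u)"
  proof (rule sum.cong)
    fix u assume "u \<in> ?p ` (S - J)"
    have "(\<Sum>b\<in>{x. x \<in> S - J \<and> ?p x = u}. c b *\<^sub>R ?p b) = (\<Sum>b\<in>{x. x \<in> S - J \<and> ?p x = u}. c b *\<^sub>R u)"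
      by (rule sum.cong) auto
    then show "(\<Sum>b\<in>{x. x \<in> S - J \<and> ?p x = u}. c b *\<^sub>R ?p b) = (\<Sum>b\<in>{x. x \<in> S - J \<and> ?p x = u}. c b) *\<^sub>R u"
      by (simp add: scaleR_sum_left)
  qed simp
  finally have eq: "?p v = (\<Sum>u\<in>qrs_base S J. (\<Sum>b\<in>{x. x \<in> S - J \<and> ?p x = u}. c b) *\<^sub>R u)"
    unfolding qrs_base_def .
  have "\<forall>u\<in>qrs_base S J. (\<Sum>b\<in>{x. x \<in> S - J \<and> ?p x = u}. c b) \<in> \<int> \<and> (\<Sum>b\<in>{x. x \<in> S - J \<and> ?p x = u}. c b) \<ge> 0"
    using c(1) by (auto intro!: Ints_sum sum_nonneg)
  then show ?thesis unfolding nonneg_int_comb_def using eq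
    by (intro exI[of _ "\<lambda>u. \<Sum>b\<in>{x. x \<in> S - J \<and> ?p x = u}. c b"]) simp
qed

lemma comb_add:
  assumes "nonneg_int_comb B u" "nonneg_int_comb B v"
  shows "nonneg_int_comb B (u + v)"
proof -
  obtain c1 where c1: "\<forall>b\<in>B. c1 b \<in> \<int> \<and> c1 b \<ge> 0" "u = (\<Sum>b\<in>B. c1 b *\<^sub>R b)"
    using assms(1) unfolding nonneg_int_comb_def by blast
  obtain c2 where c2: "\<forall>b\<in>B. c2 b \<in> \<int> \<and> c2 b \<ge> 0" "v = (\<Sum>b\<in>B. c2 b *\<^sub>R b)"
    using assms(2) unfolding nonneg_int_comb_def by blast
  have "u + v = (\<Sum>b\<in>B. (c1 b + c2 b) *\<^sub>R b)"
    using c1(2) c2(2) by (simp add: sum.distrib scaleR_add_left)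
  moreover have "\<forall>b\<in>B. c1 b + c2 b \<in> \<int> \<and> c1 b + c2 b \<ge> 0" using c1(1) c2(1) by auto
  ultimately show ?thesis unfolding nonneg_int_comb_def by (intro exI[of _ "\<lambda>b. c1 b + c2 b"]) simp
qed

theorem proposition4p17:
  fixes \<Delta> \<Sigma> J \<Phi> :: "'a::euclidean_space set"
  assumes "root_system \<Delta>"
    and "is_base \<Delta> \<Sigma>"
    and "J \<subset> \<Sigma>"
    and "inversion_set (qrs_roots \<Delta> J) (qrs_pos \<Delta> \<Sigma> J) \<Phi>"
  shows "partial_order_on (graph_components (qrs_pos \<Delta> \<Sigma> J) \<Phi>)
           (comp_le (qrs_roots \<Delta> J) (qrs_pos \<Delta> \<Sigma> J) \<Phi>)"
proof -
  note rs = assms(1)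
  have SD: "\<Sigma> \<subseteq> \<Delta>" and indep: "independent \<Sigma>"
    and bs: "\<And>b. b \<in> \<Delta> \<Longrightarrow> nonneg_int_comb \<Sigma> b \<or> nonneg_int_comb \<Sigma> (- b)"
    using assms(2) unfolding is_base_def by blast+
  have JS: "J \<subseteq> \<Sigma>" using assms(3) by blast
  have JD: "J \<subseteq> \<Delta>" using JS SD by blast
  have finS: "finite \<Sigma>" using indep by (rule eucl.finiteI_independent)
  define R where "R = qrs_roots \<Delta> J"
  define Rpos where "Rpos = qrs_pos \<Delta> \<Sigma> J"
  have inv: "\<Phi> \<subseteq> Rpos" "closed_in_rs R \<Phi>"
    using assms(4) unfolding inversion_set_def R_def Rpos_def by blast+
  obtain g :: "'a \<Rightarrow> real" where g: "linear g" "\<forall>x\<in>\<Sigma>. g x = (if x \<in> J then 0 else 1)"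
    using real_vector.linear_independent_extend[OF indep, of "\<lambda>x. if x \<in> J then (0::real) else 1"] by blast
  have g0: "g u = 0" if "u \<in> span J" for u
  proof (rule real_vector.linear_eq_0_on_span[OF g(1) _ that])
    fix x assume "x \<in> J" then show "g x = 0" using g(2) JS by auto
  qed
  have g1: "g b = 1" if bB: "b \<in> qrs_base \<Sigma> J" for b
  proof -
    obtain s where s: "s \<in> \<Sigma> - J" "b = qproj J s" using bB unfolding qrs_base_def by blast
    have "g s - g (s - qproj J s) = g (qproj J s)" using linear_diff[OF g(1)] by simp
    moreover have "g (s - qproj J s) = 0" using g0 qproj_props(1) by blast
    ultimately show ?thesis using s g(2) by simp
  qed
  have finB: "finite (qrs_base \<Sigma> J)" unfolding qrs_base_def using finS by simp
  have RposR: "Rpos \<subseteq> R" unfolding Rpos_def R_def qrs_pos_def by blast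
  have negR: "- x \<in> R" if xR0: "x \<in> R" for x
  proof -
    obtain b where b: "b \<in> \<Delta>" "x = qproj J b" "x \<noteq> 0" using xR0 unfolding R_def qrs_roots_def by blast
    have "- b \<in> \<Delta>" using rs_neg[OF rs b(1)] .
    moreover have "qproj J (- b) = - x" using b(2) qproj_neg[of J b] by simp
    ultimately show ?thesis using b(3) unfolding R_def qrs_roots_def by (auto intro: rev_image_eqI)
  qed
  interpret absQ R Rpos \<Phi> g
  proof
    show "\<And>x y. x \<in> R \<Longrightarrow> y \<in> R \<Longrightarrow> x \<noteq> - y \<Longrightarrow> x \<bullet> y < 0 \<Longrightarrow> x + y \<in> R"
      unfolding R_def using qrs_N[OF rs JD] by blast
    show "\<And>x. x \<in> R \<Longrightarrow> - x \<in> R" by (rule negR)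
    show "0 \<notin> R" unfolding R_def qrs_roots_def by blast
    show "Rpos \<subseteq> R" by (rule RposR)
    show "\<And>x. x \<in> R \<Longrightarrow> x \<in> Rpos \<or> - x \<in> Rpos"
    proof -
      fix x assume xR: "x \<in> R"
      then obtain b where b: "b \<in> \<Delta>" "x = qproj J b" unfolding R_def qrs_roots_def by blast
      from bs[OF b(1)] show "x \<in> Rpos \<or> - x \<in> Rpos"
      proof
        assume "nonneg_int_comb \<Sigma> b"
        then have "nonneg_int_comb (qrs_base \<Sigma> J) x" using proj_comb[OF finS] b(2) by blast
        then show ?thesis using xR unfolding Rpos_def R_def qrs_pos_def by blast
      next
        assume "nonneg_int_comb \<Sigma> (- b)"
        then have "nonneg_int_comb (qrs_base \<Sigma> J) (qproj J (- b))" using proj_comb[OF finS] by blast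
        moreover have "qproj J (- b) = - x" using b(2) qproj_neg[of J b] by simp
        ultimately have "nonneg_int_comb (qrs_base \<Sigma> J) (- x)" by simp
        then show ?thesis using negR[OF xR] unfolding Rpos_def R_def qrs_pos_def by blast
      qed
    qed
    show "\<And>x y. g (x + y) = g x + g y" using linear_add[OF g(1)] by blast
    show "\<And>x. x \<in> Rpos \<Longrightarrow> g x > 0"
    proof -
      fix x assume x: "x \<in> Rpos"
      then have x0: "x \<noteq> 0" and nc: "nonneg_int_comb (qrs_base \<Sigma> J) x"
        unfolding Rpos_def qrs_pos_def qrs_roots_def by auto
      obtain c where c: "\<forall>b\<in>qrs_base \<Sigma> J. c b \<in> \<int> \<and> c b \<ge> 0" "x = (\<Sum>b\<in>qrs_base \<Sigma> J. c b *\<^sub>R b)"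
        using nc unfolding nonneg_int_comb_def by blast
      have gx: "g x = (\<Sum>b\<in>qrs_base \<Sigma> J. c b)"
        using c(2) g1 by (simp add: real_vector.linear_sum[OF g(1)] linear_cmul[OF g(1)])
      have ge: "g x \<ge> 0" unfolding gx using c(1) by (simp add: sum_nonneg)
      show "g x > 0"
      proof (rule ccontr)
        assume "\<not> g x > 0"
        then have "(\<Sum>b\<in>qrs_base \<Sigma> J. c b) = 0" using ge gx by simp
        then have "\<forall>b\<in>qrs_base \<Sigma> J. c b = 0" using sum_nonneg_eq_0_iff[OF finB] c(1) by blast
        then have "x = 0" using c(2) by simp
        then show False using x0 by simp
      qed
    qed
    show "\<And>x y. x \<in> Rpos \<Longrightarrow> y \<in> Rpos \<Longrightarrow> x + y \<in> R \<Longrightarrow> x + y \<in> Rpos"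
      unfolding Rpos_def qrs_pos_def R_def using comb_add by blast
    show "finite \<Phi>"
    proof (rule finite_subset)
      show "\<Phi> \<subseteq> qproj J ` \<Delta>" using inv(1) RposR unfolding R_def qrs_roots_def by blast
      show "finite (qproj J ` \<Delta>)" using rs_fin[OF rs] by simp
    qed
    show "\<Phi> \<subseteq> Rpos" by (rule inv(1))
    show "closed_in_rs R \<Phi>" by (rule inv(2))
  qed
  show ?thesis using abs_main unfolding R_def Rpos_def .
qed


end
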